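(* For Lebesgue almost every $x\in[0,1]$ and for every $i\in\mathbb{N}$, $$\nu_i(x)=\lim_{n\to\infty}\frac{N_i(x,n)}{n}$$ exists and equals $0$.
   Context: Every irrational $x\in(0,1)$ has a unique representation ($\bar O^1$-expansion) $$x=\sum_{k=1}^\infty\frac{(-1)^{k-1}}{g_1(g_1+g_2)\cdots(g_1+g_2+\dots+g_k)},\qquad g_k=g_k(x)\in\mathbb{N}=\{1,2,3,\dots\}.$$ The $g_k(x)$ are the $\bar O^1$-symbols of $x$. For $i,n\in\mathbb{N}$, $N_i(x,n)$ is the number of indices $k\in\{1,\dots,n\}$ with $g_k(x)=i$, and $\nu_i(x)$ (the asymptotic frequency of the symbol $i$) is the limit of $N_i(x,n)/n$ when it exists. *)

theory Defs
  imports "HOL-Analysis.Analysis"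
begin

text \<open>A sequence g (indexed from 0; g 0 plays the role of g_1) of positive integers
is an O-bar-1 expansion of x if
  x = sum_{k>=0} (-1)^k / prod_{j=0..k} (g 0 + ... + g j).\<close>
definition Obar_expansion :: "(nat \<Rightarrow> nat) \<Rightarrow> real \<Rightarrow> bool" where
  "Obar_expansion g x \<longleftrightarrow> (\<forall>k. g k \<ge> 1) \<and>
     (\<lambda>k. (-1) ^ k / (\<Prod>j\<le>k. real (\<Sum>i\<le>j. g i))) sums x"

text \<open>The k-th symbol g_k(x), k >= 1 (uniquely determined for irrational x in (0,1)).\<close>
definition Obar_symbol :: "real \<Rightarrow> nat \<Rightarrow> nat" where
  "Obar_symbol x k = (THE g. Obar_expansion g x) (k - 1)"

definition Obar_count :: "nat \<Rightarrow> real \<Rightarrow> nat \<Rightarrow> nat" where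
  "Obar_count i x n = card {k \<in> {1..n}. Obar_symbol x k = i}"

end

theory Submission
  imports Defs
begin


fun ys :: "real \<Rightarrow> nat \<Rightarrow> real" where
  "ys x 0 = x"
| "ys x (Suc k) = 1 - of_int \<lfloor>1 / ys x k\<rfloor> * ys x k"

fun qn :: "real \<Rightarrow> nat \<Rightarrow> nat" where
  "qn x 0 = 0"
| "qn x (Suc k) = nat \<lfloor>1 / ys x k\<rfloor>"

definition gs :: "real \<Rightarrow> nat \<Rightarrow> nat" where "gs x k = qn x (Suc k) - qn x k"

lemma step_facts:
  fixes y :: real and Q :: nat
  assumes yq: "y \<notin> \<rat>" and y0: "0 < y" and yQ: "y < 1/(real Q+1)"
  shows "\<lfloor>1/y\<rfloor> \<ge> int Q+1" "1/(\<lfloor>1/y\<rfloor>+1) < y" "y < 1/\<lfloor>1/y\<rfloor>"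
    "1 - \<lfloor>1/y\<rfloor>*y \<notin> \<rat>" "0 < 1 - \<lfloor>1/y\<rfloor>*y" "1 - \<lfloor>1/y\<rfloor>*y < 1/(\<lfloor>1/y\<rfloor>+1)"
proof -
  define m where "m = \<lfloor>1/y\<rfloor>"
  have a: "Q+1 < 1/y" using yQ y0 by (simp add: field_simps)
  have m1: "m \<ge> Q+1" unfolding m_def using a by (simp add: le_floor_iff)
  have "1/y \<notin> \<rat>" using yq by (metis Rats_inverse inverse_eq_divide inverse_inverse_eq)
  hence ne: "real_of_int m \<noteq> 1/y" by (metis Rats_of_int)
  have "m \<le> 1/y" unfolding m_def by simp
  hence lt: "m < 1/y" using ne by simp
  have lt2: "1/y < m+1" unfolding m_def by linarith
  have mpos: "(0::real) < m" using m1 by simp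
  show "\<lfloor>1/y\<rfloor> \<ge> int Q+1" using m1 m_def by simp
  have b1: "y < 1/m" using lt mpos y0 by (simp add: field_simps)
  have b2: "1/(m+1) < y" using lt2 mpos y0 by (simp add: field_simps)
  show "1/(\<lfloor>1/y\<rfloor>+1) < y" "y < 1/\<lfloor>1/y\<rfloor>" using b1 b2 m_def by simp_all
  show "1 - \<lfloor>1/y\<rfloor>*y \<notin> \<rat>"
  proof
    assume "1 - \<lfloor>1/y\<rfloor>*y \<in> \<rat>"
    hence "1 - m*y \<in> \<rat>" unfolding m_def .
    hence "m*y \<in> \<rat>" using Rats_diff[OF Rats_1] by fastforce
    hence "(m*y) / m \<in> \<rat>" by (intro Rats_divide) auto
    moreover have "(m*y) / m = y" using mpos by simp
    ultimately show False using yq by simp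
  qed
  have "m*y < 1" using b1 mpos by (simp add: field_simps)
  thus "0 < 1 - \<lfloor>1/y\<rfloor>*y" using m_def by simp
  have "m*(1/(m+1)) < m*y" using mult_strict_left_mono[OF b2 mpos] .
  hence "m/(m+1) < m*y" by simp
  hence "1 - m*y < 1 - m/(m+1)" by simp
  also have "1 - m/(m+1) = 1/(m+1)" using mpos by (simp add: field_simps)
  finally show "1 - \<lfloor>1/y\<rfloor>*y < 1/(\<lfloor>1/y\<rfloor>+1)" using m_def by simp
qed

lemma ys_facts:
  assumes xq: "x \<notin> \<rat>" and x0: "0 < x" and x1: "x < 1"
  shows "ys x k \<notin> \<rat> \<and> 0 < ys x k \<and> ys x k < 1/(qn x k + 1)"
proof (induction k)
  case 0 then show ?case using assms by simp
next
  case (Suc k)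
  let ?y = "ys x k"
  have H: "?y \<notin> \<rat>" "0 < ?y" "?y < 1/(real (qn x k) + 1)" using Suc by (auto simp: add.commute)
  note S = step_facts[OF H]
  have "\<lfloor>1/?y\<rfloor> \<ge> 0" using S(1) by linarith
  hence "real (qn x (Suc k)) = of_int \<lfloor>1/?y\<rfloor>" by simp
  then show ?case using S(4-6) by (simp add: add.commute)
qed

lemma qn_mono:
  assumes xq: "x \<notin> \<rat>" and x0: "0 < x" and x1: "x < 1"
  shows "qn x k < qn x (Suc k)"
proof -
  let ?y = "ys x k"
  have H: "?y \<notin> \<rat>" "0 < ?y" "?y < 1/(real (qn x k) + 1)" using ys_facts[OF assms] by (auto simp: add.commute)
  note S = step_facts[OF H]
  show ?thesis using S(1) by simp
qed

lemma qn_ge: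
  assumes xq: "x \<notin> \<rat>" and x0: "0 < x" and x1: "x < 1"
  shows "k \<le> qn x k"
  by (induction k) (use qn_mono[OF assms] in \<open>auto simp: Suc_le_eq intro: le_less_trans\<close>)

lemma gs_ge1:
  assumes xq: "x \<notin> \<rat>" and x0: "0 < x" and x1: "x < 1"
  shows "gs x k \<ge> 1"
  using qn_mono[OF assms, of k] unfolding gs_def by simp

lemma gs_sum:
  assumes xq: "x \<notin> \<rat>" and x0: "0 < x" and x1: "x < 1"
  shows "(\<Sum>i\<le>j. gs x i) = qn x (Suc j)"
proof (induction j)
  case 0 then show ?case by (simp add: gs_def)
next
  case (Suc j)
  then show ?case using qn_mono[OF assms, of "Suc j"] by (simp add: gs_def del: qn.simps)
qed

lemma ys_identity:
  assumes xq: "x \<notin> \<rat>" and x0: "0 < x" and x1: "x < 1"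
  shows "x = (\<Sum>k<n. (-1)^k / (\<Prod>j<Suc k. real (qn x (Suc j))))
            + (-1)^n * ys x n / (\<Prod>j<n. real (qn x (Suc j)))"
proof (induction n)
  case 0 then show ?case by simp
next
  case (Suc n)
  define P where "P = (\<Prod>j<n. real (qn x (Suc j)))"
  define q where "q = real (qn x (Suc n))"
  have qp: "0 < qn x (Suc j)" for j using qn_mono[OF assms, of j] by linarith
  have Ppos: "P > 0" unfolding P_def using qp by (intro prod_pos) (simp del: qn.simps)
  have qpos: "q > 0" unfolding q_def using qp[of n] by (simp del: qn.simps)
  have qf: "q = of_int \<lfloor>1 / ys x n\<rfloor>"
  proof -
    have "\<lfloor>1 / ys x n\<rfloor> \<ge> 0" using ys_facts[OF assms, of n] by auto
    thus ?thesis unfolding q_def qn.simps by (metis of_nat_nat)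
  qed
  have ysS: "ys x (Suc n) = 1 - q * ys x n" using qf by simp
  have PS: "(\<Prod>j<Suc n. real (qn x (Suc j))) = P * q" unfolding P_def q_def by simp
  have "(-1)^n * ys x n / P = (-1)^n / (P*q) + (-1)^Suc n * ys x (Suc n) / (P*q)"
    using Ppos qpos unfolding ysS by (simp add: field_simps)
  moreover have "x = (\<Sum>k<n. (-1)^k / (\<Prod>j<Suc k. real (qn x (Suc j)))) + (-1)^n * ys x n / P"
    using Suc.IH unfolding P_def .
  ultimately show ?case unfolding PS sum.lessThan_Suc by simp
qed

lemma gs_expansion:
  assumes xq: "x \<notin> \<rat>" and x0: "0 < x" and x1: "x < 1"
  shows "Obar_expansion (gs x) x"
  unfolding Obar_expansion_def
proof (intro conjI allI gs_ge1[OF assms])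
  define P where "P = (\<lambda>n. \<Prod>j<n. real (qn x (Suc j)))"
  have qp: "0 < qn x (Suc j)" for j using qn_mono[OF assms, of j] by linarith
  have Ppos: "P n \<ge> 1" for n unfolding P_def using qp
    by (intro prod_ge_1) (simp add: Suc_le_eq del: qn.simps)
  have eq: "(\<lambda>k. (- 1) ^ k / (\<Prod>j\<le>k. real (\<Sum>i\<le>j. gs x i))) =
     (\<lambda>k. (-1)^k / (\<Prod>j<Suc k. real (qn x (Suc j))))"
    by (simp add: gs_sum[OF assms] lessThan_Suc_atMost)
  have r: "(\<lambda>n. (-1)^n * ys x n / P n) \<longlonglongrightarrow> 0"
  proof (rule Lim_null_comparison[OF _ LIMSEQ_inverse_real_of_nat])
    show "\<forall>\<^sub>F n in sequentially. norm ((-1)^n * ys x n / P n) \<le> inverse (real (Suc n))"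
    proof (intro always_eventually allI)
      fix n
      have f: "ys x n \<notin> \<rat> \<and> 0 < ys x n \<and> ys x n < 1/(qn x n + 1)" using ys_facts[OF assms] .
      have "1/(real (qn x n) + 1) \<le> 1/(real n+1)" using qn_ge[OF assms, of n]
        by (intro divide_left_mono) auto
      moreover have "1/ real(qn x n + 1) = 1/(real (qn x n) + 1)" by simp
      ultimately have a: "ys x n \<le> 1/(real n + 1)" using f by linarith
      have "norm ((-1)^n * ys x n / P n) = ys x n / P n" using f Ppos[of n] by (simp add: abs_mult)
      also have "\<dots> \<le> ys x n" using f Ppos[of n] by (simp add: divide_le_eq)
      finally have "norm ((-1)^n * ys x n / P n) \<le> ys x n" .
      moreover have "inverse (real (Suc n)) = 1/(real n + 1)" by (simp add: inverse_eq_divide)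
      ultimately show "norm ((-1)^n * ys x n / P n) \<le> inverse (real (Suc n))" using a by linarith
    qed
  qed
  have "(\<lambda>n. x - (-1)^n * ys x n / P n) \<longlonglongrightarrow> x - 0" by (intro tendsto_intros r)
  moreover have "(\<lambda>n. x - (-1)^n * ys x n / P n) = (\<lambda>n. \<Sum>k<n. (-1)^k / (\<Prod>j<Suc k. real (qn x (Suc j))))"
    using ys_identity[OF assms] unfolding P_def by (auto simp: algebra_simps)
  ultimately show "(\<lambda>k. (- 1) ^ k / (\<Prod>j\<le>k. real (\<Sum>i\<le>j. gs x i))) sums x"
    unfolding eq sums_def by simp
qed

lemma leibniz_strict:
  fixes a :: "nat \<Rightarrow> real"
  assumes "a \<longlonglongrightarrow> 0" "\<And>n. 0 < a n" "\<And>n. a (Suc n) < a n"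
  shows "a 0 - a 1 < (\<Sum>i. (-1)^i * a i)" "(\<Sum>i. (-1)^i * a i) < a 0"
proof -
  have m: "\<And>n. a (Suc n) \<le> a n" using assms(3) less_imp_le by blast
  have p: "\<And>n. 0 \<le> a n" using assms(2) less_imp_le by blast
  note L = summable_Leibniz'[OF assms(1) p m]
  have "(\<Sum>i<2*2. (-1)^i*a i) \<le> (\<Sum>i. (-1)^i*a i)" using L(2) .
  moreover have "(\<Sum>i<2*2. (-1)^i*a i) = a 0 - a 1 + a 2 - a 3" by (simp add: numeral_eq_Suc)
  moreover have "a 3 < a 2" using assms(3)[of 2] by (simp add: numeral_eq_Suc)
  ultimately show "a 0 - a 1 < (\<Sum>i. (-1)^i * a i)" by linarith
  have "(\<Sum>i. (-1)^i*a i) \<le> (\<Sum>i<2*1+1. (-1)^i*a i)" using L(4) .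
  moreover have "(\<Sum>i<2*1+1. (-1)^i*a i) = a 0 - a 1 + a 2" by (simp add: numeral_eq_Suc)
  moreover have "a 2 < a 1" using assms(3)[of 1] by (simp add: numeral_eq_Suc)
  ultimately show "(\<Sum>i. (-1)^i * a i) < a 0" by linarith
qed

lemma expansion_unique:
  assumes E: "Obar_expansion g x"
  shows "g = gs x"
proof -
  have g1: "\<And>k. g k \<ge> 1" and S: "(\<lambda>k. (-1) ^ k / (\<Prod>j\<le>k. real (\<Sum>i\<le>j. g i))) sums x"
    using E unfolding Obar_expansion_def by auto
  define Q where "Q j = real (\<Sum>i\<le>j. g i)" for j
  define a where "a n k = 1 / (\<Prod>j\<le>k. Q (n+j))" for n k
  define t where "t n = (\<Sum>k. (-1)^k * a n k)" for n
  have QS: "Q (Suc j) = Q j + real (g (Suc j))" for j unfolding Q_def by simp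
  have Q1: "Q j \<ge> 1" for j
  proof -
    have "g 0 \<le> (\<Sum>i\<le>j. g i)" by (rule member_le_sum) auto
    thus ?thesis using g1[of 0] unfolding Q_def by linarith
  qed
  have Q2: "Q (Suc j) \<ge> Q j + 1" for j using QS g1[of "Suc j"] by simp
  have Q3: "Q (Suc j) \<ge> 2" for j using Q1[of j] Q2[of j] by simp
  have apos: "a n k > 0" for n k unfolding a_def using Q1 by (intro divide_pos_pos prod_pos) (auto intro: less_le_trans[OF zero_less_one])
  have aSuc: "a n (Suc k) = a n k / Q (n + Suc k)" for n k
    unfolding a_def by simp
  have adec: "a n (Suc k) < a n k" for n k
  proof -
    have "a n k / Q (n + Suc k) < a n k / 1" using apos[of n k] Q3[of "n+k"]
      by (intro divide_strict_left_mono) auto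
    thus ?thesis using aSuc by simp
  qed
  have ahalf: "a n k \<le> (1/2)^k" for n k
  proof (induction k)
    case 0 then show ?case unfolding a_def using Q1[of n] by simp
  next
    case (Suc k)
    have "a n (Suc k) = a n k / Q (n + Suc k)" by (rule aSuc)
    also have "\<dots> \<le> a n k / 2" using apos[of n k] Q3[of "n+k"] by (intro divide_left_mono) auto
    also have "\<dots> \<le> (1/2)^Suc k" using Suc by simp
    finally show ?case .
  qed
  have alim: "a n \<longlonglongrightarrow> 0" for n
  proof (rule Lim_null_comparison[OF _ LIMSEQ_power_zero[of "1/2::real"]])
    show "\<forall>\<^sub>F k in sequentially. norm (a n k) \<le> (1/2)^k"
      using ahalf apos by (intro always_eventually allI) (simp add: less_imp_le)
  qed simp
  have summ: "summable (\<lambda>k. (-1)^k * a n k)" for n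
    using summable_Leibniz'(1)[OF alim, of n] apos adec by (simp add: less_imp_le)
  note LS = leibniz_strict[OF alim apos adec]
  have T1: "t 0 = x"
  proof -
    have "(\<lambda>k. (-1)^k * a 0 k) = (\<lambda>k. (-1) ^ k / (\<Prod>j\<le>k. real (\<Sum>i\<le>j. g i)))"
      unfolding a_def Q_def by simp
    thus ?thesis unfolding t_def using sums_unique[OF S] by simp
  qed
  have T2: "Q n * t n = 1 - t (Suc n)" for n
  proof -
    have sh: "a n (Suc k) = a (Suc n) k / Q n" for k
      unfolding a_def by (simp add: prod.atMost_Suc_shift del: prod.atMost_Suc)
    have "(\<Sum>k. (-1)^(Suc k) * a n (Suc k)) = t n - (-1)^0 * a n 0"
      unfolding t_def by (rule suminf_split_head[OF summ])
    moreover have "(\<lambda>k. (-1)^(Suc k) * a n (Suc k)) = (\<lambda>k. - ((-1)^k * a (Suc n) k) / Q n)"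
      by (auto simp: sh)
    moreover have "(\<Sum>k. - ((-1)^k * a (Suc n) k) / Q n) = - t (Suc n) / Q n"
      unfolding t_def using summ[of "Suc n"]
      by (simp add: suminf_divide suminf_minus summable_minus summable_divide)
    ultimately have "t n - a n 0 = - t (Suc n) / Q n" by simp
    moreover have "a n 0 = 1 / Q n" unfolding a_def by simp
    ultimately have e: "t n = (1 - t (Suc n)) / Q n" by (simp add: diff_divide_distrib)
    have "Q n \<noteq> 0" using Q1[of n] by simp
    thus ?thesis unfolding e by simp
  qed
  have T3: "\<lfloor>1 / t n\<rfloor> = int (\<Sum>i\<le>n. g i)" for n
  proof -
    have lo: "a n 0 - a n 1 < t n" and hi: "t n < a n 0" using LS[of n] unfolding t_def by auto
    have a0: "a n 0 = 1 / Q n" unfolding a_def by simp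
    have a1: "a n 1 = 1 / (Q n * Q (Suc n))" unfolding a_def by simp
    have q1: "Q n \<ge> 1" using Q1 .
    have "1/(Q n * Q (Suc n)) \<le> 1/(Q n * (Q n + 1))"
      using Q2[of n] q1 by (intro divide_left_mono mult_left_mono) auto
    moreover have "1/(Q n+1) = 1/Q n - 1/(Q n*(Q n+1))"
    proof -
      have "Q n \<noteq> 0" "Q n + 1 \<noteq> 0" "Q n + Q n * Q n \<noteq> 0" using q1 by (auto, smt (verit) mult_nonneg_nonneg)
      thus ?thesis by (simp add: field_simps)
    qed
    ultimately have "1/(Q n + 1) \<le> a n 0 - a n 1" unfolding a0 a1 by linarith
    hence tlo: "1/(Q n + 1) < t n" using lo by linarith
    have tpos: "t n > 0" using tlo q1 by (smt (verit) divide_pos_pos)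
    have u1: "Q n < 1 / t n" using hi a0 tpos q1 by (simp add: field_simps)
    have u2: "1 / t n < Q n + 1" using tlo tpos q1 by (simp add: field_simps)
    have "Q n = of_int (int (\<Sum>i\<le>n. g i))" unfolding Q_def by simp
    thus ?thesis using u1 u2 by (simp add: floor_eq_iff)
  qed
  have Y: "ys x n = t n" for n
  proof (induction n)
    case 0 then show ?case using T1 by simp
  next
    case (Suc n)
    have "ys x (Suc n) = 1 - Q n * t n" using T3[of n] Suc unfolding Q_def by simp
    then show ?case using T2[of n] by simp
  qed
  have qnS: "qn x (Suc n) = (\<Sum>i\<le>n. g i)" for n using Y[of n] T3[of n] by (simp del: of_nat_sum add: of_nat_sum[symmetric])
  show ?thesis
  proof
    fix n show "g n = gs x n"
      
    proof (cases n)
      case 0 thus ?thesis unfolding gs_def using qnS[of 0] by (simp del: qn.simps add: qn.simps(1))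
    next
      case (Suc m) thus ?thesis unfolding gs_def using qnS[of m] qnS[of "Suc m"] by (simp del: qn.simps)
    qed
  qed
qed




lemma ys_measurable[measurable]: "(\<lambda>x. ys x k) \<in> borel_measurable borel"
  by (induction k) auto

fun qr :: "real \<Rightarrow> nat \<Rightarrow> real" where
  "qr x 0 = 0"
| "qr x (Suc k) = of_int \<lfloor>1 / ys x k\<rfloor>"

lemma qr_measurable[measurable]: "(\<lambda>x. qr x k) \<in> borel_measurable borel"
  by (cases k) auto

lemma nn_integral_Ioc_Ico:
  fixes h :: "real \<Rightarrow> ennreal"
  shows "(\<integral>\<^sup>+z. indicator {a..<b} z * h z \<partial>lborel) = (\<integral>\<^sup>+z. indicator {a<..b} z * h z \<partial>lborel)"
proof (rule nn_integral_cong_AE)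
  show "AE z in lborel. indicator {a..<b} z * h z = indicator {a<..b} z * h z"
    using AE_lborel_singleton[of a] AE_lborel_singleton[of b]
    by eventually_elim (auto simp: indicator_def)
qed

lemma aux_ineq: assumes mp: "(0::real) < m" shows "(1 - m*y < 1/(m+1)) \<longleftrightarrow> (1/(m+1) < y)"
proof -
  have m1: "0 < m+1" using mp by simp
  have a: "1/(m+1) < y \<longleftrightarrow> 1 < y*(m+1)" using m1 by (simp add: divide_less_eq)
  have b: "1 - m*y < 1/(m+1) \<longleftrightarrow> (1 - m*y)*(m+1) < 1" using m1 by (simp add: less_divide_eq)
  have c: "(1 - m*y)*(m+1) < 1 \<longleftrightarrow> m*1 < m*(y*(m+1))" by (simp add: algebra_simps)
  have d: "m*1 < m*(y*(m+1)) \<longleftrightarrow> 1 < y*(m+1)" using mp by (rule mult_less_cancel_left_pos)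
  show ?thesis using a b c d by simp
qed

lemma affine_piece:
  fixes G :: "real \<times> real \<Rightarrow> ennreal" and m :: nat
  assumes [measurable]: "G \<in> borel_measurable borel" and m: "m > 0"
  shows "(\<integral>\<^sup>+y. G (real m, 1 - real m * y) * indicator {1/(real m+1)<..1/real m} y \<partial>lborel)
     = ennreal (1/real m) * (\<integral>\<^sup>+z. indicator {0<..1/(real m+1)} z * G (real m, z) \<partial>lborel)"
proof -
  define f where "f z = indicator {0..<1/(real m+1)} z * G (real m, z)" for z
  have fm[measurable]: "f \<in> borel_measurable borel" unfolding f_def by measurable
  have mp: "(0::real) < m" using m by simp
  have "(\<integral>\<^sup>+z. f z \<partial>lborel) = ennreal \<bar>- real m\<bar> * (\<integral>\<^sup>+y. f (1 + (- real m) * y) \<partial>lborel)"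
    by (rule nn_integral_real_affine[OF fm]) (use mp in simp)
  also have "(\<lambda>y. f (1 + (- real m) * y)) = (\<lambda>y. G (real m, 1 - real m * y) * indicator {1/(real m+1)<..1/real m} y)"
  proof
    fix y :: real
    have "(0 \<le> 1 - m*y \<and> 1 - m*y < 1/(m+1)) \<longleftrightarrow> (1/(m+1) < y \<and> y \<le> 1/m)"
    proof -
      have "0 \<le> 1 - m*y \<longleftrightarrow> y \<le> 1/m" using mp by (simp add: field_simps)
      moreover have "1 - m*y < 1/(m+1) \<longleftrightarrow> 1/(m+1) < y" using aux_ineq[OF mp, of y] by (simp add: add.commute)
      ultimately show ?thesis by blast
    qed
    hence mem: "(1 + (- real m)*y \<in> {0..<1/(real m+1)}) = (y \<in> {1/(real m+1)<..1/real m})" by (simp add: add.commute)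
    show "f (1 + (- real m) * y) = G (real m, 1 - real m * y) * indicator {1/(real m+1)<..1/real m} y"
      unfolding f_def indicator_def mem by (simp add: mult.commute)
  qed
  finally have e: "(\<integral>\<^sup>+z. f z \<partial>lborel) = ennreal (real m) * (\<integral>\<^sup>+y. G (real m, 1 - real m * y) * indicator {1/(real m+1)<..1/real m} y \<partial>lborel)"
    by simp
  have "ennreal (1/real m) * (\<integral>\<^sup>+z. f z \<partial>lborel) = (ennreal (1/real m) * ennreal (real m)) * (\<integral>\<^sup>+y. G (real m, 1 - real m * y) * indicator {1/(real m+1)<..1/real m} y \<partial>lborel)"
    unfolding e by (simp add: mult.assoc)
  also have "ennreal (1/real m) * ennreal (real m) = 1" using mp by (simp flip: ennreal_mult)
  finally have "ennreal (1/real m) * (\<integral>\<^sup>+z. f z \<partial>lborel) = (\<integral>\<^sup>+y. G (real m, 1 - real m * y) * indicator {1/(real m+1)<..1/real m} y \<partial>lborel)" by simp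
  moreover have "(\<integral>\<^sup>+z. f z \<partial>lborel) = (\<integral>\<^sup>+z. indicator {0<..1/(real m+1)} z * G (real m, z) \<partial>lborel)"
    unfolding f_def by (rule nn_integral_Ioc_Ico)
  ultimately show ?thesis by simp
qed

lemma piece_floor:
  fixes y :: real and m :: nat
  assumes "m > 0" "1/(real m+1) < y" "y \<le> 1/real m"
  shows "\<lfloor>1/y\<rfloor> = int m"
proof -
  have mp: "(0::real) < m" using assms(1) by simp
  have yp: "y > 0" using assms(2) mp by (smt (verit) divide_pos_pos)
  have a: "real m \<le> 1/y" using assms(3) mp yp by (simp add: field_simps)
  have b: "1/y < real m + 1" using assms(2) mp yp by (simp add: field_simps)
  show ?thesis using a b by (simp add: floor_eq_iff)
qed

lemma step_integral:
  fixes G :: "real \<times> real \<Rightarrow> ennreal" and Q :: nat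
  assumes [measurable]: "G \<in> borel_measurable borel"
  shows "(\<integral>\<^sup>+y. indicator {0<..1/(real Q+1)} y * G (of_int \<lfloor>1/y\<rfloor>, 1 - of_int \<lfloor>1/y\<rfloor> * y) \<partial>lborel)
     = (\<Sum>m. (if Q < m then ennreal (1/real m) else 0) * (\<integral>\<^sup>+z. indicator {0<..1/(real m+1)} z * G (real m, z) \<partial>lborel))"
proof -
  define A where "A m = (if Q < m then {1/(real m+1)<..1/real m} else {})" for m :: nat
  have fl: "\<lfloor>1/y\<rfloor> = int m \<and> Q < m" if "y \<in> A m" for y m
  proof -
    have "Q < m" using that unfolding A_def by (auto split: if_splits)
    moreover have "\<lfloor>1/y\<rfloor> = int m" using that \<open>Q < m\<close> unfolding A_def
      by (intro piece_floor) auto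
    ultimately show ?thesis by simp
  qed
  have disj: "disjoint_family A"
    unfolding disjoint_family_on_def using fl by (metis disjoint_iff of_nat_eq_iff)
  have Am[measurable]: "A m \<in> sets borel" for m unfolding A_def by auto
  have pw: "indicator {0<..1/(real Q+1)} y * G (of_int \<lfloor>1/y\<rfloor>, 1 - of_int \<lfloor>1/y\<rfloor> * y)
      = (\<Sum>m. G (real m, 1 - real m * y) * indicator (A m) y)" for y
  proof (cases "y \<in> {0<..1/(real Q+1)}")
    case True
    hence yp: "0 < y" and yQ: "y \<le> 1/(real Q+1)" by auto
    have "real Q + 1 \<le> 1/y" using yp yQ by (simp add: field_simps)
    hence fQ: "\<lfloor>1/y\<rfloor> \<ge> int Q + 1" by (simp add: le_floor_iff)
    define m0 where "m0 = nat \<lfloor>1/y\<rfloor>"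
    have m0r: "real m0 = of_int \<lfloor>1/y\<rfloor>" unfolding m0_def using fQ by simp
    have Qm: "Q < m0" unfolding m0_def using fQ by linarith
    have m0p: "(0::real) < m0" using Qm by simp
    have u1: "real m0 \<le> 1/y" using m0r by simp
    have u2: "1/y < real m0 + 1" using m0r by linarith
    have "y \<le> 1/real m0" using u1 yp m0p by (simp add: field_simps)
    moreover have "1/(real m0+1) < y" using u2 yp m0p by (simp add: field_simps)
    ultimately have "y \<in> A m0" unfolding A_def using Qm by simp
    hence "(\<Sum>m. G (real m, 1 - real m * y) * indicator (A m) y) = G (real m0, 1 - real m0 * y)"
      by (rule suminf_cmult_indicator[OF disj])
    then show ?thesis using True m0r by simp
  next
    case False
    have "y \<notin> A m" for m
    proof
      assume "y \<in> A m"
      hence Qm: "Q < m" and a: "1/(real m+1) < y" and b: "y \<le> 1/real m" unfolding A_def by (auto split: if_splits)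
      have "0 < y" using a by (smt (verit) divide_pos_pos of_nat_0_le_iff)
      moreover have "1/real m \<le> 1/(real Q+1)" using Qm by (intro divide_left_mono) auto
      ultimately show False using False b by auto
    qed
    then show ?thesis using False by simp
  qed
  have "(\<integral>\<^sup>+y. indicator {0<..1/(real Q+1)} y * G (of_int \<lfloor>1/y\<rfloor>, 1 - of_int \<lfloor>1/y\<rfloor> * y) \<partial>lborel)
      = (\<integral>\<^sup>+y. (\<Sum>m. G (real m, 1 - real m * y) * indicator (A m) y) \<partial>lborel)"
    by (simp add: pw)
  also have "\<dots> = (\<Sum>m. \<integral>\<^sup>+y. G (real m, 1 - real m * y) * indicator (A m) y \<partial>lborel)"
    by (rule nn_integral_suminf) measurable
  also have "\<dots> = (\<Sum>m. (if Q < m then ennreal (1/real m) else 0) * (\<integral>\<^sup>+z. indicator {0<..1/(real m+1)} z * G (real m, z) \<partial>lborel))"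
  proof (rule suminf_cong)
    fix m
    show "(\<integral>\<^sup>+y. G (real m, 1 - real m * y) * indicator (A m) y \<partial>lborel) =
        (if Q < m then ennreal (1/real m) else 0) * (\<integral>\<^sup>+z. indicator {0<..1/(real m+1)} z * G (real m, z) \<partial>lborel)"
    proof (cases "Q < m")
      case True
      then show ?thesis unfolding A_def using affine_piece[of G m] by simp
    next
      case False
      then show ?thesis unfolding A_def by simp
    qed
  qed
  finally show ?thesis .
qed

lemma snd_borel_rr[measurable]: "(snd :: real\<times>real \<Rightarrow> real) \<in> borel_measurable borel"
  by (intro borel_measurable_continuous_onI continuous_intros)

lemma fst_borel_rr[measurable]: "(fst :: real\<times>real \<Rightarrow> real) \<in> borel_measurable borel"
  by (intro borel_measurable_continuous_onI continuous_intros)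

lemma ennreal_suminf_swap:
  fixes f :: "nat \<Rightarrow> nat \<Rightarrow> ennreal"
  shows "(\<Sum>i. \<Sum>j. f i j) = (\<Sum>j. \<Sum>i. f i j)"
proof -
  have "(\<Sum>i. \<Sum>j. f i j) = (\<integral>\<^sup>+i. (\<Sum>j. f i j) \<partial>count_space UNIV)"
    by (rule nn_integral_count_space_nat[symmetric])
  also have "\<dots> = (\<Sum>j. \<integral>\<^sup>+i. f i j \<partial>count_space UNIV)"
    by (rule nn_integral_suminf) simp
  also have "\<dots> = (\<Sum>j. \<Sum>i. f i j)" by (simp add: nn_integral_count_space_nat)
  finally show ?thesis .
qed

lemma invariant:
  "\<exists>c::nat \<Rightarrow> ennreal. (\<forall>Q<k. c Q = 0) \<and> (\<forall>F::real\<times>real\<Rightarrow>ennreal. F \<in> borel_measurable borel \<longrightarrow>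
     (\<integral>\<^sup>+x. indicator {0<..1} x * F (qr x k, ys x k) \<partial>lborel)
       = (\<Sum>Q. c Q * (\<integral>\<^sup>+y. indicator {0<..1/(real Q+1)} y * F (real Q, y) \<partial>lborel)))"
proof (induction k)
  case 0
  define c :: "nat \<Rightarrow> ennreal" where "c Q = (if Q = 0 then 1 else 0)" for Q
  have "(\<integral>\<^sup>+x. indicator {0<..1} x * F (qr x 0, ys x 0) \<partial>lborel)
       = (\<Sum>Q. c Q * (\<integral>\<^sup>+y. indicator {0<..1/(real Q+1)} y * F (real Q, y) \<partial>lborel))" for F
  proof -
    have "(\<Sum>Q. c Q * (\<integral>\<^sup>+y. indicator {0<..1/(real Q+1)} y * F (real Q, y) \<partial>lborel))
        = (\<Sum>Q\<in>{0}. c Q * (\<integral>\<^sup>+y. indicator {0<..1/(real Q+1)} y * F (real Q, y) \<partial>lborel))"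
      by (rule suminf_finite) (auto simp: c_def)
    then show ?thesis by (simp add: c_def)
  qed
  then show ?case by (intro exI[of _ c]) auto
next
  case (Suc k)
  then obtain c :: "nat \<Rightarrow> ennreal" where c0: "\<forall>Q<k. c Q = 0" and
    cF: "\<And>F::real\<times>real\<Rightarrow>ennreal. F \<in> borel_measurable borel \<Longrightarrow>
     (\<integral>\<^sup>+x. indicator {0<..1} x * F (qr x k, ys x k) \<partial>lborel)
       = (\<Sum>Q. c Q * (\<integral>\<^sup>+y. indicator {0<..1/(real Q+1)} y * F (real Q, y) \<partial>lborel))" by blast
  define w :: "nat \<Rightarrow> nat \<Rightarrow> ennreal" where "w Q m = (if Q < m then ennreal (1/real m) else 0)" for Q m
  define c' where "c' m = (\<Sum>Q. c Q * w Q m)" for m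
  have c'0: "\<forall>m<Suc k. c' m = 0"
  proof (intro allI impI)
    fix m assume "m < Suc k"
    hence "c Q * w Q m = 0" for Q using c0 unfolding w_def by auto
    hence "(\<lambda>Q. c Q * w Q m) = (\<lambda>Q. 0)" by auto
    thus "c' m = 0" unfolding c'_def by simp
  qed
  have "(\<integral>\<^sup>+x. indicator {0<..1} x * F (qr x (Suc k), ys x (Suc k)) \<partial>lborel)
       = (\<Sum>m. c' m * (\<integral>\<^sup>+y. indicator {0<..1/(real m+1)} y * F (real m, y) \<partial>lborel))"
    if Fm[measurable]: "F \<in> borel_measurable borel" for F :: "real\<times>real\<Rightarrow>ennreal"
  proof -
    define F' where "F' p = F (of_int \<lfloor>1/snd p\<rfloor>, 1 - of_int \<lfloor>1/snd p\<rfloor> * snd p)" for p :: "real \<times> real"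
    have F'm: "F' \<in> borel_measurable borel" unfolding F'_def by measurable
    define J where "J m = (\<integral>\<^sup>+z. indicator {0<..1/(real m+1)} z * F (real m, z) \<partial>lborel)" for m :: nat
    have "(\<integral>\<^sup>+x. indicator {0<..1} x * F (qr x (Suc k), ys x (Suc k)) \<partial>lborel)
        = (\<integral>\<^sup>+x. indicator {0<..1} x * F' (qr x k, ys x k) \<partial>lborel)"
      unfolding F'_def by simp
    also have "\<dots> = (\<Sum>Q. c Q * (\<integral>\<^sup>+y. indicator {0<..1/(real Q+1)} y * F' (real Q, y) \<partial>lborel))"
      by (rule cF[OF F'm])
    also have "\<dots> = (\<Sum>Q. c Q * (\<Sum>m. w Q m * J m))"
      unfolding F'_def J_def w_def by (simp add: step_integral[OF Fm])
    also have "\<dots> = (\<Sum>Q. \<Sum>m. c Q * w Q m * J m)"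
      by (simp add: mult.assoc)
    also have "\<dots> = (\<Sum>m. \<Sum>Q. c Q * w Q m * J m)" by (rule ennreal_suminf_swap)
    also have "\<dots> = (\<Sum>m. c' m * J m)" unfolding c'_def by simp
    finally show ?thesis unfolding J_def .
  qed
  then show ?case using c'0 by blast
qed

lemma mass:
  assumes cF: "\<And>F::real\<times>real\<Rightarrow>ennreal. F \<in> borel_measurable borel \<Longrightarrow>
     (\<integral>\<^sup>+x. indicator {0<..1} x * F (qr x k, ys x k) \<partial>lborel)
       = (\<Sum>Q. c Q * (\<integral>\<^sup>+y. indicator {0<..1/(real Q+1)} y * F (real Q, y) \<partial>lborel))"
  shows "(\<Sum>Q. c Q * ennreal (1/(real Q+1))) = 1"
proof -
  have "(\<integral>\<^sup>+x. indicator {0<..1::real} x * (\<lambda>_. 1) (qr x k, ys x k) \<partial>lborel)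
       = (\<Sum>Q. c Q * (\<integral>\<^sup>+y. indicator {0<..1/(real Q+1)} y * (\<lambda>_. 1) (real Q, y) \<partial>lborel))"
    by (rule cF) simp
  moreover have "(\<integral>\<^sup>+y. indicator {0<..1/(real Q+1)} y * (\<lambda>_. 1) (real Q, y) \<partial>lborel) = ennreal (1/(real Q+1))" for Q
    by simp
  ultimately show ?thesis by simp
qed

lemma event_bound:
  assumes i: "i \<ge> 1"
  shows "(\<integral>\<^sup>+x. indicator {0<..1} x * indicator {x. qr x (Suc k) = qr x k + real i} x \<partial>lborel) \<le> ennreal (1/(real k+1))"
proof -
  obtain c :: "nat \<Rightarrow> ennreal" where c0: "\<forall>Q<k. c Q = 0" and
    cF: "\<And>F::real\<times>real\<Rightarrow>ennreal. F \<in> borel_measurable borel \<Longrightarrow>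
     (\<integral>\<^sup>+x. indicator {0<..1} x * F (qr x k, ys x k) \<partial>lborel)
       = (\<Sum>Q. c Q * (\<integral>\<^sup>+y. indicator {0<..1/(real Q+1)} y * F (real Q, y) \<partial>lborel))"
    using invariant[of k] by blast
  define F :: "real\<times>real\<Rightarrow>ennreal" where "F p = indicator {p. of_int \<lfloor>1/snd p\<rfloor> = fst p + real i} p" for p
  define g :: "real\<times>real\<Rightarrow>real" where "g p = of_int \<lfloor>1/snd p\<rfloor> - fst p" for p
  have gm: "g \<in> borel_measurable borel" unfolding g_def by measurable
  have "g -` {real i} \<inter> space borel \<in> sets borel" by (rule borel_measurable_vimage[OF gm])
  hence gs: "g -` {real i} \<in> sets borel" by simp
  have "F = indicator (g -` {real i})" unfolding F_def g_def by (auto simp: indicator_def fun_eq_iff)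
  hence Fm: "F \<in> borel_measurable borel" using gs by simp
  have "(\<integral>\<^sup>+x. indicator {0<..1} x * indicator {x. qr x (Suc k) = qr x k + real i} x \<partial>lborel)
      = (\<integral>\<^sup>+x. indicator {0<..1} x * F (qr x k, ys x k) \<partial>lborel)"
    unfolding F_def by (simp add: indicator_def)
  also have "\<dots> = (\<Sum>Q. c Q * (\<integral>\<^sup>+y. indicator {0<..1/(real Q+1)} y * F (real Q, y) \<partial>lborel))"
    by (rule cF[OF Fm])
  also have "\<dots> \<le> (\<Sum>Q. c Q * ennreal (1/(real Q+1)) * ennreal (1/(real k+1)))"
  proof (intro suminf_le summableI)
    fix Q
    show "c Q * (\<integral>\<^sup>+y. indicator {0<..1/(real Q+1)} y * F (real Q, y) \<partial>lborel) \<le> c Q * ennreal (1/(real Q+1)) * ennreal (1/(real k+1))"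
    proof (cases "Q < k")
      case True then show ?thesis using c0 by simp
    next
      case False
      define n where "n = Q + i"
      have n1: "n \<ge> 1" "n \<ge> k + 1" "n \<ge> Q" using i False unfolding n_def by auto
      have "(\<integral>\<^sup>+y. indicator {0<..1/(real Q+1)} y * F (real Q, y) \<partial>lborel)
          \<le> (\<integral>\<^sup>+y. indicator {1/(real n+1)<..1/real n} y \<partial>lborel)"
      proof (intro nn_integral_mono)
        fix y :: real
        show "indicator {0<..1/(real Q+1)} y * F (real Q, y) \<le> indicator {1/(real n+1)<..1/real n} y"
        proof (cases "0 < y \<and> of_int \<lfloor>1/y\<rfloor> = real Q + real i")
          case True
          hence yp: "0 < y" and fl: "of_int \<lfloor>1/y\<rfloor> = real n" unfolding n_def by auto
          have u1: "real n \<le> 1/y" using fl by (metis of_int_floor_le)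
          have u2: "1/y < real n + 1" using fl by (metis floor_correct of_int_1 of_int_add add.commute real_of_int_floor_add_one_gt)
          have np: "(0::real) < n" using n1 by simp
          have "y \<le> 1/real n" using u1 yp np by (simp add: field_simps)
          moreover have "1/(real n+1) < y" using u2 yp np by (simp add: field_simps)
          ultimately show ?thesis by (simp add: indicator_def F_def)
        next
          case False
          then show ?thesis unfolding F_def by (auto simp: indicator_def)
        qed
      qed
      also have "\<dots> = ennreal (1/real n - 1/(real n+1))"
      proof -
        have "1/(real n+1) \<le> 1/real n" using n1 by (intro divide_left_mono) auto
        thus ?thesis by simp
      qed
      also have "\<dots> \<le> ennreal (1/(real Q+1) * (1/(real k+1)))"
      proof (intro ennreal_leI)
        have np: "(0::real) < n" using n1 by simp
        have "1/real n - 1/(real n+1) = 1/(real n+1) * (1/real n)" using np by (simp add: field_simps)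
        also have "\<dots> \<le> 1/(real Q+1) * (1/(real k+1))"
          using n1 np by (intro mult_mono divide_left_mono) auto
        finally show "1/real n - 1/(real n+1) \<le> 1/(real Q+1) * (1/(real k+1))" .
      qed
      also have "\<dots> = ennreal (1/(real Q+1)) * ennreal (1/(real k+1))" by (rule ennreal_mult) auto
      finally show ?thesis by (simp add: mult.assoc mult_left_mono)
    qed
  qed
  also have "\<dots> = (\<Sum>Q. c Q * ennreal (1/(real Q+1))) * ennreal (1/(real k+1))" by simp
  also have "\<dots> = ennreal (1/(real k+1))" using mass[OF cF] by simp
  finally show ?thesis .
qed





lemma sub_to_full:
  fixes N :: "nat \<Rightarrow> nat" and C :: real
  assumes mono: "\<And>m n. m \<le> n \<Longrightarrow> N m \<le> N n"
    and bd: "\<And>j. real (N (4^j)) \<le> C * 3^j"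
  shows "(\<lambda>n. real (N n) / real n) \<longlonglongrightarrow> 0"
proof (rule LIMSEQ_I)
  fix r :: real assume r: "0 < r"
  have "(\<lambda>j. 4*C*(3/4::real)^j) \<longlonglongrightarrow> 4*C*0"
    by (intro tendsto_mult_left LIMSEQ_power_zero) auto
  hence "eventually (\<lambda>j. 4*C*(3/4::real)^j < r) sequentially"
    using r by (intro order_tendstoD(2)) auto
  then obtain J0 where J0: "\<And>j. j \<ge> J0 \<Longrightarrow> 4*C*(3/4::real)^j < r"
    unfolding eventually_sequentially by blast
  define J where "J = max J0 1"
  show "\<exists>no. \<forall>n\<ge>no. norm (real (N n) / real n - 0) < r"
  proof (intro exI allI impI)
    fix n assume n: "n \<ge> (4::nat)^J"
    have "n < 2^n" by (rule less_exp)
    also have "(2::nat)^n \<le> 4^n" by (rule power_mono) auto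
    finally have ex: "\<exists>j. n \<le> (4::nat)^j" by (intro exI[of _ n]) simp
    define j where "j = (LEAST j. n \<le> (4::nat)^j)"
    have nj: "n \<le> 4^j" unfolding j_def by (rule LeastI_ex[OF ex])
    have "(4::nat)^J \<le> 4^j" using n nj by linarith
    hence Jj: "J \<le> j" by (simp add: power_increasing_iff)
    hence j1: "j \<ge> 1" "j \<ge> J0" unfolding J_def by auto
    have "\<not> n \<le> 4^(j-1)"
    proof
      assume "n \<le> 4^(j-1)"
      hence "j \<le> j - 1" unfolding j_def by (rule Least_le)
      thus False using j1 by simp
    qed
    hence lt: "4^(j-1) < n" by simp
    have "(4::nat)^j = 4 * 4^(j-1)" using j1 by (metis Suc_diff_1 less_le_trans power_Suc zero_less_one)
    hence j4: "(4::nat)^j < 4*n" using lt by simp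
    have npos: "(0::real) < n" using lt by simp
    have C0: "0 \<le> C" using bd[of 0] by simp
    have "real (N n) \<le> real (N (4^j))" using mono[OF nj] by simp
    also have "\<dots> \<le> C * 3^j" by (rule bd)
    finally have a: "real (N n) \<le> C * 3^j" .
    have "real (N n) / real n \<le> C * 3^j / real n" using a npos by (simp add: divide_right_mono)
    also have "\<dots> \<le> C * 3^j / (real (4^j) / 4)"
    proof (intro divide_left_mono)
      have "real (4^j) \<le> real (4*n)" using j4 by (simp only: of_nat_le_iff)
      thus "real (4^j) / 4 \<le> real n" by simp
    qed (use C0 npos in auto)
    also have "\<dots> = 4*C*(3/4)^j" by (simp add: power_divide)
    also have "\<dots> < r" using J0 j1 by simp
    finally have "real (N n) / real n < r" .
    moreover have "0 \<le> real (N n) / real n" by simp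
    ultimately show "norm (real (N n) / real n - 0) < r" by simp
  qed
qed

lemma sqrt_step: "1/(real n+1) \<le> 2* sqrt(real n + 1) - 2* sqrt(real n)"
proof -
  define a where "a = sqrt (real n)"
  define b where "b = sqrt (real n + 1)"
  have a0: "a \<ge> 0" unfolding a_def by simp
  have b1: "b \<ge> 1" unfolding b_def by simp
  have ab: "b*b - a*a = 1" unfolding a_def b_def by simp
  have bb: "b*b = real n + 1" unfolding b_def by simp
  have le: "a \<le> b" unfolding a_def b_def by simp
  have p: "(b - a) * (a + b) = 1" using ab by (simp add: algebra_simps)
  have "1/(real n+1) = (1/b)*(1/b)" using bb by simp
  also have "\<dots> \<le> 1/b * 1" using b1 by (intro mult_left_mono) auto
  also have "1/b * 1 = 1/b" by simp
  also have "1/b \<le> 2*(b - a)"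
  proof -
    have "1 = (b - a) * (a + b)" using p by simp
    also have "\<dots> \<le> (b - a) * (2*b)" using le a0 by (intro mult_left_mono) auto
    finally have "1 \<le> 2*(b-a)*b" by (simp add: algebra_simps)
    thus ?thesis using b1 by (simp add: divide_le_eq)
  qed
  finally show ?thesis unfolding a_def b_def by simp
qed

lemma harm_sqrt: "(\<Sum>k<n. 1/(real k+1)) \<le> 2* sqrt(real n)"
proof (induction n)
  case 0 then show ?case by simp
next
  case (Suc n)
  then show ?case using sqrt_step[of n] by (simp add: add.commute)
qed

definition Nr :: "nat \<Rightarrow> real \<Rightarrow> nat \<Rightarrow> nat" where
  "Nr i x n = card {k \<in> {..<n}. qr x (Suc k) = qr x k + real i}"

definition Ne :: "nat \<Rightarrow> real \<Rightarrow> nat \<Rightarrow> ennreal" where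
  "Ne i x n = (\<Sum>k<n. indicator {x. qr x (Suc k) = qr x k + real i} x)"

lemma Ne_measurable[measurable]: "(\<lambda>x. Ne i x n) \<in> borel_measurable borel"
  unfolding Ne_def by measurable

lemma Nr_Ne: "ennreal (real (Nr i x n)) = Ne i x n"
proof -
  have "real (Nr i x n) = (\<Sum>k\<in>{k \<in> {..<n}. qr x (Suc k) = qr x k + real i}. (1::real))"
    unfolding Nr_def by simp
  also have "\<dots> = (\<Sum>k<n. if qr x (Suc k) = qr x k + real i then 1 else 0)"
    by (rule sum.inter_filter) simp
  finally have "ennreal (real (Nr i x n)) = (\<Sum>k<n. ennreal (if qr x (Suc k) = qr x k + real i then 1 else 0))"
    by (simp add: sum_ennreal)
  also have "\<dots> = Ne i x n" unfolding Ne_def by (intro sum.cong) (auto simp: indicator_def)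
  finally show ?thesis .
qed

lemma expected_count:
  assumes i: "i \<ge> 1"
  shows "(\<integral>\<^sup>+x. indicator {0<..1} x * Ne i x n \<partial>lborel) \<le> ennreal (2* sqrt (real n))"
proof -
  have "(\<integral>\<^sup>+x. indicator {0<..1} x * Ne i x n \<partial>lborel)
      = (\<integral>\<^sup>+x. (\<Sum>k<n. indicator {0<..1} x * indicator {x. qr x (Suc k) = qr x k + real i} x) \<partial>lborel)"
    unfolding Ne_def by (simp add: sum_distrib_left)
  also have "\<dots> = (\<Sum>k<n. \<integral>\<^sup>+x. indicator {0<..1} x * indicator {x. qr x (Suc k) = qr x k + real i} x \<partial>lborel)"
    by (rule nn_integral_sum) measurable
  also have "\<dots> \<le> (\<Sum>k<n. ennreal (1/(real k+1)))"
    by (intro sum_mono event_bound[OF i])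
  also have "\<dots> = ennreal (\<Sum>k<n. 1/(real k+1))" by (simp add: sum_ennreal)
  also have "\<dots> \<le> ennreal (2* sqrt (real n))" by (intro ennreal_leI harm_sqrt)
  finally show ?thesis .
qed

lemma sqrt_4pow: "sqrt ((4::real)^j) = 2^j"
proof -
  have "(4::real)^j = (2^2)^j" by simp
  also have "\<dots> = (2^j)^2" by (metis power_mult mult.commute)
  finally have "(4::real)^j = (2^j)^2" .
  thus ?thesis by simp
qed

lemma AE_bound:
  assumes i: "i \<ge> 1"
  shows "AE x in lborel. x \<in> {0<..1} \<longrightarrow> (\<exists>C. \<forall>j. real (Nr i x (4^j)) \<le> C * 3^j)"
proof -
  define f where "f x = (\<Sum>j. ennreal ((1/3)^j) * (indicator {0<..1} x * Ne i x (4^j)))" for x :: real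
  have fm: "f \<in> borel_measurable lborel" unfolding f_def by measurable
  have "(\<integral>\<^sup>+x. f x \<partial>lborel) = (\<Sum>j. \<integral>\<^sup>+x. ennreal ((1/3)^j) * (indicator {0<..1} x * Ne i x (4^j)) \<partial>lborel)"
    unfolding f_def by (rule nn_integral_suminf) measurable
  also have "\<dots> = (\<Sum>j. ennreal ((1/3)^j) * \<integral>\<^sup>+x. indicator {0<..1} x * Ne i x (4^j) \<partial>lborel)"
    by (subst nn_integral_cmult) auto
  also have "\<dots> \<le> (\<Sum>j. ennreal (2*(2/3)^j))"
  proof (intro suminf_le summableI)
    fix j
    have "ennreal ((1/3)^j) * (\<integral>\<^sup>+x. indicator {0<..1} x * Ne i x (4^j) \<partial>lborel)
        \<le> ennreal ((1/3)^j) * ennreal (2* sqrt (real ((4::nat)^j)))"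
      by (intro mult_left_mono expected_count[OF i]) auto
    also have "\<dots> = ennreal ((1/3)^j * (2*2^j))" by (simp add: sqrt_4pow ennreal_mult)
    also have "(1/3::real)^j * (2*2^j) = 2*(2/3)^j" by (simp add: power_divide)
    finally show "ennreal ((1/3)^j) * (\<integral>\<^sup>+x. indicator {0<..1} x * Ne i x (4^j) \<partial>lborel) \<le> ennreal (2*(2/3)^j)" .
  qed
  also have "\<dots> < \<infinity>"
  proof -
    have "summable (\<lambda>j. 2*(2/3::real)^j)" by (intro summable_mult summable_geometric) auto
    hence "(\<Sum>j. ennreal (2*(2/3)^j)) \<noteq> top" by (intro ennreal_suminf_neq_top) auto
    thus ?thesis by (simp add: top.not_eq_extremum)
  qed
  finally have "integral\<^sup>N lborel f \<noteq> \<infinity>" by simp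
  hence AEf: "AE x in lborel. f x \<noteq> \<infinity>" by (rule nn_integral_PInf_AE[OF fm])
  show ?thesis
  proof (rule AE_mp[OF AEf], intro AE_I2 impI)
    fix x :: real assume fx: "f x \<noteq> \<infinity>" and x: "x \<in> {0<..1}"
    define a where "a j = (1/3::real)^j * real (Nr i x (4^j))" for j
    have "f x = (\<Sum>j. ennreal (a j))" unfolding f_def a_def using x
      by (simp add: Nr_Ne[symmetric] ennreal_mult)
    hence "(\<Sum>j. ennreal (a j)) \<noteq> top" using fx by simp
    hence sa: "summable a" by (rule summable_suminf_not_top[rotated]) (simp add: a_def)
    show "\<exists>C. \<forall>j. real (Nr i x (4^j)) \<le> C * 3^j"
    proof (intro exI allI)
      fix j
      have "sum a {j} \<le> suminf a" by (rule sum_le_suminf[OF sa]) (auto simp: a_def)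
      hence "a j \<le> suminf a" by simp
      hence "a j * 3^j \<le> suminf a * 3^j" by (intro mult_right_mono) auto
      moreover have "a j * 3^j = real (Nr i x (4^j))" unfolding a_def by (simp add: power_divide)
      ultimately show "real (Nr i x (4^j)) \<le> suminf a * 3^j" by linarith
    qed
  qed
qed




lemma qr_qn:
  assumes xq: "x \<notin> \<rat>" and x0: "0 < x" and x1: "x < 1"
  shows "qr x k = real (qn x k)"
proof (cases k)
  case 0 then show ?thesis by simp
next
  case (Suc m)
  have "0 < ys x m" using ys_facts[OF assms, of m] by auto
  hence "\<lfloor>1 / ys x m\<rfloor> \<ge> 0" by simp
  then show ?thesis using Suc by simp
qed

lemma symbol_eq:
  assumes xq: "x \<notin> \<rat>" and x0: "0 < x" and x1: "x < 1"
  shows "Obar_symbol x k = gs x (k - 1)"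
proof -
  have "(THE g. Obar_expansion g x) = gs x"
    by (rule the_equality[where P="\<lambda>g. Obar_expansion g x"]) (auto intro: gs_expansion[OF assms] expansion_unique)
  thus ?thesis unfolding Obar_symbol_def by simp
qed

lemma count_eq:
  assumes xq: "x \<notin> \<rat>" and x0: "0 < x" and x1: "x < 1" and i: "i \<ge> 1"
  shows "Obar_count i x n = Nr i x n"
proof -
  have set1: "{k \<in> {1..n}. Obar_symbol x k = i} = Suc ` {k \<in> {..<n}. gs x k = i}"
  proof (intro equalityI subsetI)
    fix k assume "k \<in> {k \<in> {1..n}. Obar_symbol x k = i}"
    hence k: "1 \<le> k" "k \<le> n" "gs x (k - 1) = i" using symbol_eq[OF xq x0 x1] by auto
    hence "k = Suc (k - 1)" "k - 1 \<in> {k \<in> {..<n}. gs x k = i}" by auto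
    thus "k \<in> Suc ` {k \<in> {..<n}. gs x k = i}" by (metis imageI)
  next
    fix k assume "k \<in> Suc ` {k \<in> {..<n}. gs x k = i}"
    then obtain m where "k = Suc m" "m < n" "gs x m = i" by auto
    thus "k \<in> {k \<in> {1..n}. Obar_symbol x k = i}" using symbol_eq[OF xq x0 x1] by auto
  qed
  have set2: "{k \<in> {..<n}. gs x k = i} = {k \<in> {..<n}. qr x (Suc k) = qr x k + real i}"
  proof -
    have "gs x k = i \<longleftrightarrow> qr x (Suc k) = qr x k + real i" for k
    proof -
      have "qn x k < qn x (Suc k)" by (rule qn_mono[OF xq x0 x1])
      hence "gs x k = i \<longleftrightarrow> qn x (Suc k) = qn x k + i" unfolding gs_def by presburger
      also have "\<dots> \<longleftrightarrow> real (qn x (Suc k)) = real (qn x k) + real i" by (simp only: of_nat_add[symmetric] of_nat_eq_iff)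
      finally show ?thesis using qr_qn[OF xq x0 x1] by (simp del: qn.simps qr.simps)
    qed
    thus ?thesis by auto
  qed
  have "Obar_count i x n = card (Suc ` {k \<in> {..<n}. gs x k = i})"
    unfolding Obar_count_def set1 ..
  also have "\<dots> = card {k \<in> {..<n}. gs x k = i}" by (rule card_image) simp
  also have "\<dots> = Nr i x n" unfolding Nr_def set2 ..
  finally show ?thesis .
qed

lemma Nr_mono: "m \<le> n \<Longrightarrow> Nr i x m \<le> Nr i x n"
  unfolding Nr_def by (intro card_mono) auto

theorem lemma1:
  shows "AE x in lborel. x \<in> {0..1} \<longrightarrow>
           (\<forall>i::nat. i \<ge> 1 \<longrightarrow>
              (\<lambda>n. real (Obar_count i x n) / real n) \<longlonglongrightarrow> 0)"
proof -
  have AEq: "AE x in lborel. x \<notin> \<rat>"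
    by (rule AE_not_in[OF countable_imp_null_set_lborel[OF countable_rat]])
  have AEb: "AE x in lborel. \<forall>i::nat. i \<ge> 1 \<longrightarrow> x \<in> {0<..1} \<longrightarrow> (\<exists>C. \<forall>j. real (Nr i x (4^j)) \<le> C * 3^j)"
  proof (subst AE_all_countable, intro allI)
    fix i :: nat
    show "AE x in lborel. i \<ge> 1 \<longrightarrow> x \<in> {0<..1} \<longrightarrow> (\<exists>C. \<forall>j. real (Nr i x (4^j)) \<le> C * 3^j)"
    proof (cases "1 \<le> i")
      case True show ?thesis using AE_bound[OF True] by eventually_elim auto
    next
      case False thus ?thesis by simp
    qed
  qed
  show ?thesis
    using AEq AEb
  proof eventually_elim
    case (elim x)
    show ?case
    proof (intro impI allI)
      fix i :: nat assume x: "x \<in> {0..1}" and i: "1 \<le> i"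
      have x0: "0 < x" using x elim(1) by (cases "x = 0") auto
      have x1: "x < 1" using x elim(1) by (cases "x = 1") auto
      obtain C where C: "\<And>j. real (Nr i x (4^j)) \<le> C * 3^j" using elim(2) i x0 x1 by auto
      have "(\<lambda>n. real (Nr i x n) / real n) \<longlonglongrightarrow> 0"
        by (rule sub_to_full[of "Nr i x" C]) (auto intro: Nr_mono C)
      moreover have "(\<lambda>n. real (Obar_count i x n) / real n) = (\<lambda>n. real (Nr i x n) / real n)"
        using count_eq[OF elim(1) x0 x1 i] by simp
      ultimately show "(\<lambda>n. real (Obar_count i x n) / real n) \<longlonglongrightarrow> 0" by simp
    qed
  qed
qed


end
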